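(* Let $G$ be a finite simple graph with edge weight function $w$ and vertex weight function $w_1$, let $u$ be a vertex of $G$, and let $T=T(G,u)$ be the weighted path-tree of $G$ with respect to $u$. Then $$\frac{\eta_{(w,w_1)}(G\setminus u,x)}{\eta_{(w,w_1)}(G,x)}=\frac{\eta_{(w,w_1)}(T\setminus u,x)}{\eta_{(w,w_1)}(T,x)}.$$
   Context: An edge weight function $w$ assigns a nonzero complex number to each edge; a vertex weight function $w_1$ assigns a real number (possibly $0$) to each vertex; subgraphs carry restricted weights; $G\setminus u$ deletes $u$ and its incident edges. For $A\subseteq E(G)$, $w(A)=\prod_{e\in A}w(e)$. $\mu_w(G,x)=\sum_{M}(-1)^{|M|}|w(M)|^2x^{n-2|M|}$ over all matchings $M$ (including empty). $\eta_{(w,w_1)}(G,x)=\sum_{S\subseteq V(G)}(-1)^{|V(G)\setminus S|}\big(\prod_{v\in V(G)\setminus S}w_1(v)\big)\mu_w(G[S],x)$ with $G[S]$ the induced subgraph; $\mu_w,\eta$ of the empty graph equal $1$. The path-tree $T(G,u)$ has as vertices the paths in $G$ starting at $u$ (the trivial path $u$ included, and denoted $u$); two such paths are adjacent iff one is obtained from the other by appending one vertex, i.e. $p'=p\,y$ where $y$ is adjacent in $G$ to the last vertex $z$ of $p$; this edge gets weight $w(e_{zy})$. The vertex $u$ of $T$ gets weight $w_1(u)$, and a path of length at least $1$ gets weight $w_1$ of its endpoint other than $u$. *)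

theory Defs
  imports Complex_Main
begin

definition simple_graph :: "'v set \<Rightarrow> 'v set set \<Rightarrow> bool" where
  "simple_graph V E \<longleftrightarrow> finite V \<and> (\<forall>e\<in>E. \<exists>a b. a \<noteq> b \<and> a \<in> V \<and> b \<in> V \<and> e = {a, b})"

definition matchings :: "'v set set \<Rightarrow> 'v set set set" where
  "matchings E = {M. M \<subseteq> E \<and> (\<forall>e\<in>M. \<forall>f\<in>M. e \<noteq> f \<longrightarrow> e \<inter> f = {})}"

definition mu_w :: "('v set \<Rightarrow> complex) \<Rightarrow> 'v set \<Rightarrow> 'v set set \<Rightarrow> real \<Rightarrow> real" where
  "mu_w w V E x = (\<Sum>M\<in>matchings E. (-1) ^ card M * (cmod (\<Prod>e\<in>M. w e))\<^sup>2 * x ^ (card V - 2 * card M))"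

definition induced_edges :: "'v set set \<Rightarrow> 'v set \<Rightarrow> 'v set set" where
  "induced_edges E S = {e \<in> E. e \<subseteq> S}"

definition eta :: "('v set \<Rightarrow> complex) \<Rightarrow> ('v \<Rightarrow> real) \<Rightarrow> 'v set \<Rightarrow> 'v set set \<Rightarrow> real \<Rightarrow> real" where
  "eta w w1 V E x = (\<Sum>S\<in>Pow V. (-1) ^ card (V - S) * (\<Prod>v\<in>V - S. w1 v) * mu_w w S (induced_edges E S) x)"

definition del_vertices :: "'v set \<Rightarrow> 'v \<Rightarrow> 'v set" where
  "del_vertices V u = V - {u}"
definition del_edges :: "'v set set \<Rightarrow> 'v \<Rightarrow> 'v set set" where
  "del_edges E u = {e \<in> E. u \<notin> e}"

definition gpaths :: "'v set \<Rightarrow> 'v set set \<Rightarrow> 'v \<Rightarrow> 'v list set" where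
  "gpaths V E u = {p. p \<noteq> [] \<and> hd p = u \<and> distinct p \<and> set p \<subseteq> V \<and>
      (\<forall>i. Suc i < length p \<longrightarrow> {p ! i, p ! Suc i} \<in> E)}"

definition tree_edges :: "'v set \<Rightarrow> 'v set set \<Rightarrow> 'v \<Rightarrow> 'v list set set" where
  "tree_edges V E u = {{p, p @ [y]} | p y. p \<in> gpaths V E u \<and> p @ [y] \<in> gpaths V E u}"

(* edge weight on the path-tree: edge {p, p@[y]} gets w(e_{zy}), z = last p *)
definition tree_w :: "('v set \<Rightarrow> complex) \<Rightarrow> 'v list set \<Rightarrow> complex" where
  "tree_w w e = (let q = (THE q. q \<in> e \<and> q \<noteq> [] \<and> butlast q \<in> e) in w {last (butlast q), last q})"

definition tree_w1 :: "('v \<Rightarrow> real) \<Rightarrow> 'v list \<Rightarrow> real" where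
  "tree_w1 w1 p = w1 (last p)"

end

theory Submission
  imports Defs
begin

definition F :: "('v \<Rightarrow> real) \<Rightarrow> ('v set \<Rightarrow> real) \<Rightarrow> 'v set \<Rightarrow> 'v set set \<Rightarrow> real" where
  "F f c V E = (\<Sum>M\<in>matchings E. (-1) ^ card M * (\<Prod>e\<in>M. c e) * (\<Prod>v\<in>V - \<Union>M. f v))"

lemma sg_finite_E: "simple_graph V E \<Longrightarrow> finite E"
proof -
  assume "simple_graph V E"
  then have "E \<subseteq> Pow V" "finite V" unfolding simple_graph_def by auto
  then show ?thesis by (meson finite_Pow_iff finite_subset)
qed

lemma finite_matchings: "finite E \<Longrightarrow> finite (matchings E)"
  unfolding matchings_def by (rule finite_subset[of _ "Pow E"]) auto

lemma matching_finite: "finite E \<Longrightarrow> M \<in> matchings E \<Longrightarrow> finite M"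
  unfolding matchings_def using finite_subset by blast

lemma F_rec:
  assumes sg: "simple_graph V E" and uV: "u \<in> V"
  shows "F f c V E = f u * F f c (V - {u}) (del_edges E u)
     - (\<Sum>v\<in>{v. {u,v} \<in> E}. c {u,v} * F f c (V - {u} - {v}) (del_edges (del_edges E u) v))"
proof -
  have finV: "finite V" using sg unfolding simple_graph_def by auto
  have finE: "finite E" using sg_finite_E[OF sg] .
  define N where "N = {v. {u,v} \<in> E}"
  have NV: "N \<subseteq> V - {u}"
  proof
    fix v assume "v \<in> N"
    then have "{u,v} \<in> E" unfolding N_def by auto
    then obtain a b where "a \<noteq> b" "a \<in> V" "b \<in> V" "{u,v} = {a,b}" using sg unfolding simple_graph_def by blast
    then show "v \<in> V - {u}" by (auto simp: doubleton_eq_iff)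
  qed
  have finN: "finite N" using NV finV finite_subset by blast
  define tm where "tm = (\<lambda>W M. (-1::real) ^ card M * (\<Prod>e\<in>M. c e) * (\<Prod>v\<in>W - \<Union>M. f v))"
  define E2 where "E2 = (\<lambda>v. del_edges (del_edges E u) v)"
  define A where "A = {M\<in>matchings E. \<forall>e\<in>M. u \<notin> e}"
  define B where "B = {M\<in>matchings E. \<exists>e\<in>M. u \<in> e}"
  have AB: "matchings E = A \<union> B" "A \<inter> B = {}" unfolding A_def B_def by auto
  have finME: "finite (matchings E)" using finite_matchings[OF finE] .
  have s1: "F f c V E = sum (tm V) A + sum (tm V) B"
  proof -
    have "F f c V E = sum (tm V) (A \<union> B)" unfolding F_def tm_def AB(1)[symmetric] by simp
    also have "\<dots> = sum (tm V) A + sum (tm V) B"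
      by (rule sum.union_disjoint) (use AB finME in auto)
    finally show ?thesis .
  qed
  have s2: "A = matchings (del_edges E u)"
    unfolding A_def matchings_def del_edges_def by auto
  have s3: "sum (tm V) (matchings (del_edges E u)) = f u * F f c (V - {u}) (del_edges E u)"
    unfolding F_def sum_distrib_left
  proof (rule sum.cong)
    fix M assume M: "M \<in> matchings (del_edges E u)"
    then have "u \<notin> \<Union>M" unfolding matchings_def del_edges_def by auto
    then have "V - \<Union>M = insert u ((V - {u}) - \<Union>M)" using uV by auto
    then have "(\<Prod>v\<in>V - \<Union>M. f v) = f u * (\<Prod>v\<in>(V - {u}) - \<Union>M. f v)"
      using finV by simp
    then show "tm V M = f u * ((-1) ^ card M * (\<Prod>e\<in>M. c e) * (\<Prod>v\<in>V - {u} - \<Union>M. f v))"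
      unfolding tm_def by simp
  qed simp
  have s4: "B = (\<Union>v\<in>N. insert {u,v} ` matchings (E2 v))"
  proof
    show "B \<subseteq> (\<Union>v\<in>N. insert {u,v} ` matchings (E2 v))"
    proof
      fix M assume "M \<in> B"
      then obtain e where M: "M \<in> matchings E" "e \<in> M" "u \<in> e" unfolding B_def by auto
      then have "e \<in> E" unfolding matchings_def by auto
      then obtain a b where ab: "a \<noteq> b" "e = {a,b}" using sg unfolding simple_graph_def by blast
      then obtain v where v: "e = {u,v}" "v \<noteq> u" using M(3) by auto
      have vN: "v \<in> N" using \<open>e \<in> E\<close> v unfolding N_def by auto
      have sub: "M - {e} \<subseteq> E2 v"
      proof
        fix g assume g: "g \<in> M - {e}"
        have gE: "g \<in> E" using g M(1) unfolding matchings_def by auto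
        have "g \<inter> e = {}" using g M(1,2) unfolding matchings_def by auto
        then show "g \<in> E2 v" using gE v unfolding E2_def del_edges_def by auto
      qed
      have "M - {e} \<in> matchings (E2 v)"
        using sub M(1) unfolding matchings_def by auto
      moreover have "M = insert {u,v} (M - {e})" using M v by auto
      ultimately show "M \<in> (\<Union>v\<in>N. insert {u,v} ` matchings (E2 v))" using vN by blast
    qed
  next
    show "(\<Union>v\<in>N. insert {u,v} ` matchings (E2 v)) \<subseteq> B"
    proof clarify
      fix v M' assume v: "v \<in> N" and M': "M' \<in> matchings (E2 v)"
      have "{u,v} \<in> E" using v unfolding N_def by auto
      then show "insert {u,v} M' \<in> B"
        using M' unfolding B_def matchings_def E2_def del_edges_def by auto
    qed
  qed
  have s5: "sum (tm V) (\<Union>v\<in>N. insert {u,v} ` matchings (E2 v))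
      = (\<Sum>v\<in>N. sum (tm V) (insert {u,v} ` matchings (E2 v)))"
  proof (rule sum.UNION_disjoint)
    show "finite N" by (rule finN)
    show "\<forall>i\<in>N. finite (insert {u, i} ` matchings (E2 i))"
      using finE unfolding E2_def del_edges_def by (auto intro!: finite_matchings)
    show "\<forall>i\<in>N. \<forall>j\<in>N. i \<noteq> j \<longrightarrow> insert {u, i} ` matchings (E2 i) \<inter> insert {u, j} ` matchings (E2 j) = {}"
    proof (intro ballI impI)
      fix i j assume "i \<in> N" "j \<in> N" "i \<noteq> j"
      show "insert {u, i} ` matchings (E2 i) \<inter> insert {u, j} ` matchings (E2 j) = {}"
      proof (rule ccontr)
        assume "insert {u, i} ` matchings (E2 i) \<inter> insert {u, j} ` matchings (E2 j) \<noteq> {}"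
        then obtain X where X1: "X \<in> insert {u, i} ` matchings (E2 i)" and X2: "X \<in> insert {u, j} ` matchings (E2 j)"
          by auto
        obtain M1 where M: "M1 \<in> matchings (E2 i)" "X = insert {u,i} M1" using X1 by (rule imageE) simp
        obtain M2 where "X = insert {u,j} M2" using X2 by (rule imageE) simp
        then have "{u,j} \<in> insert {u,i} M1" using M(2) by simp
        moreover have "{u,j} \<noteq> {u,i}" using \<open>i \<noteq> j\<close> by (auto simp: doubleton_eq_iff)
        ultimately have "{u,j} \<in> M1" by simp
        then have "{u,j} \<in> E2 i" using M(1) unfolding matchings_def by auto
        then show False unfolding E2_def del_edges_def by simp
      qed
    qed
  qed
  have s6: "sum (tm V) (insert {u,v} ` matchings (E2 v)) = - (c {u,v} * F f c (V - {u} - {v}) (E2 v))"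
    if v: "v \<in> N" for v
  proof -
    have notin: "{u,v} \<notin> M'" if "M' \<in> matchings (E2 v)" for M'
      using that unfolding matchings_def E2_def del_edges_def by auto
    have "inj_on (insert {u,v}) (matchings (E2 v))"
      proof (rule inj_onI)
      fix X Y assume "X \<in> matchings (E2 v)" "Y \<in> matchings (E2 v)" "insert {u,v} X = insert {u,v} Y"
      then show "X = Y" using notin insert_ident by metis
    qed
    then have "sum (tm V) (insert {u,v} ` matchings (E2 v)) = sum (tm V \<circ> insert {u,v}) (matchings (E2 v))"
      by (rule sum.reindex)
    also have "\<dots> = (\<Sum>M\<in>matchings (E2 v). - (c {u,v} * tm (V - {u} - {v}) M))"
    proof (rule sum.cong)
      fix M assume M: "M \<in> matchings (E2 v)"
      have "finite (E2 v)" unfolding E2_def del_edges_def using finE by simp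
      then have fM: "finite M" using M by (rule matching_finite)
      have "V - \<Union>(insert {u,v} M) = (V - {u} - {v}) - \<Union>M" by auto
      then show "(tm V \<circ> insert {u, v}) M = - (c {u, v} * tm (V - {u} - {v}) M)"
        unfolding tm_def using notin[OF M] fM by simp
    qed simp
    finally show ?thesis unfolding F_def tm_def sum_negf sum_distrib_left by simp
  qed
  have "sum (tm V) B = (\<Sum>v\<in>N. - (c {u,v} * F f c (V - {u} - {v}) (E2 v)))"
    using s4 s5 s6 by simp
  then show ?thesis using s1 s2 s3 unfolding N_def E2_def by (simp add: sum_negf)
qed

lemma sg_edge: "simple_graph V E \<Longrightarrow> e \<in> E \<Longrightarrow> e \<subseteq> V \<and> e \<noteq> {} \<and> finite e"
  unfolding simple_graph_def by auto

lemma sg_Un: assumes "simple_graph V1 E1" "simple_graph V2 E2"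
  shows "simple_graph (V1 \<union> V2) (E1 \<union> E2)"
  unfolding simple_graph_def
proof (intro conjI ballI)
  show "finite (V1 \<union> V2)" using assms unfolding simple_graph_def by auto
  fix e assume "e \<in> E1 \<union> E2"
  then show "\<exists>a b. a \<noteq> b \<and> a \<in> V1 \<union> V2 \<and> b \<in> V1 \<union> V2 \<and> e = {a, b}"
  proof
    assume "e \<in> E1"
    then obtain a b where "a \<noteq> b \<and> a \<in> V1 \<and> b \<in> V1 \<and> e = {a, b}" using assms(1) unfolding simple_graph_def by metis
    then show ?thesis by blast
  next
    assume "e \<in> E2"
    then obtain a b where "a \<noteq> b \<and> a \<in> V2 \<and> b \<in> V2 \<and> e = {a, b}" using assms(2) unfolding simple_graph_def by metis
    then show ?thesis by blast
  qed
qed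

lemma sg_UN: assumes "finite I" "\<forall>i\<in>I. simple_graph (V i) (E i)"
  shows "simple_graph (\<Union>i\<in>I. V i) (\<Union>i\<in>I. E i)"
  unfolding simple_graph_def
proof (intro conjI ballI)
  show "finite (\<Union>i\<in>I. V i)" using assms unfolding simple_graph_def by auto
  fix e assume "e \<in> (\<Union>i\<in>I. E i)"
  then obtain i where i: "i \<in> I" "e \<in> E i" by blast
  then obtain a b where "a \<noteq> b \<and> a \<in> V i \<and> b \<in> V i \<and> e = {a, b}" using assms(2) unfolding simple_graph_def by metis
  then show "\<exists>a b. a \<noteq> b \<and> a \<in> (\<Union>i\<in>I. V i) \<and> b \<in> (\<Union>i\<in>I. V i) \<and> e = {a, b}" using i by blast
qed

lemma F_union:
  assumes sg1: "simple_graph V1 E1" and sg2: "simple_graph V2 E2" and disj: "V1 \<inter> V2 = {}"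
  shows "F f c (V1 \<union> V2) (E1 \<union> E2) = F f c V1 E1 * F f c V2 E2"
proof -
  define tm where "tm = (\<lambda>W M. (-1::real) ^ card M * (\<Prod>e\<in>M. c e) * (\<Prod>v\<in>W - \<Union>M. f v))"
  have finE1: "finite E1" using sg_finite_E[OF sg1] .
  have finE2: "finite E2" using sg_finite_E[OF sg2] .
  have fV1: "finite V1" "finite V2" using sg1 sg2 unfolding simple_graph_def by auto
  have E12: "E1 \<inter> E2 = {}" using sg_edge[OF sg1] sg_edge[OF sg2] disj by blast
  have m1: "M \<subseteq> E1 \<and> finite M \<and> \<Union>M \<subseteq> V1" if "M \<in> matchings E1" for M
    using that sg_edge[OF sg1] finE1 finite_subset unfolding matchings_def by blast
  have m2: "M \<subseteq> E2 \<and> finite M \<and> \<Union>M \<subseteq> V2" if "M \<in> matchings E2" for M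
    using that sg_edge[OF sg2] finE2 finite_subset unfolding matchings_def by blast
  have "F f c V1 E1 * F f c V2 E2 = (\<Sum>a\<in>matchings E1. \<Sum>b\<in>matchings E2. tm V1 a * tm V2 b)"
    unfolding F_def tm_def by (rule sum_product)
  also have "\<dots> = (\<Sum>(a,b)\<in>matchings E1 \<times> matchings E2. tm V1 a * tm V2 b)"
    by (rule sum.cartesian_product)
  also have "\<dots> = (\<Sum>(a,b)\<in>matchings E1 \<times> matchings E2. tm (V1 \<union> V2) (a \<union> b))"
  proof (rule sum.cong, simp, clarify)
    fix a b assume a: "a \<in> matchings E1" and b: "b \<in> matchings E2"
    note ma = m1[OF a] and mb = m2[OF b]
    have ab: "a \<inter> b = {}" using ma mb E12 by blast
    have "card (a \<union> b) = card a + card b" using ma mb ab card_Un_disjoint by blast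
    moreover have "(\<Prod>e\<in>a \<union> b. c e) = (\<Prod>e\<in>a. c e) * (\<Prod>e\<in>b. c e)"
      using ma mb ab prod.union_disjoint by blast
    moreover have "(V1 \<union> V2) - \<Union>(a \<union> b) = (V1 - \<Union>a) \<union> (V2 - \<Union>b)"
      using ma mb disj by blast
    moreover have "(\<Prod>v\<in>(V1 - \<Union>a) \<union> (V2 - \<Union>b). f v) = (\<Prod>v\<in>V1 - \<Union>a. f v) * (\<Prod>v\<in>V2 - \<Union>b. f v)"
      by (rule prod.union_disjoint) (use fV1 disj in auto)
    ultimately show "tm V1 a * tm V2 b = tm (V1 \<union> V2) (a \<union> b)"
      unfolding tm_def by (simp add: power_add mult_ac)
  qed
  also have "\<dots> = sum (tm (V1 \<union> V2)) ((\<lambda>(a,b). a \<union> b) ` (matchings E1 \<times> matchings E2))"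
  proof (subst sum.reindex)
    show "inj_on (\<lambda>(a,b). a \<union> b) (matchings E1 \<times> matchings E2)"
    proof (rule inj_onI, clarify)
      fix a b a' b' assume a: "a \<in> matchings E1" "a' \<in> matchings E1" and b: "b \<in> matchings E2" "b' \<in> matchings E2"
        and eq: "a \<union> b = a' \<union> b'"
      have "a = (a \<union> b) \<inter> E1" "a' = (a' \<union> b') \<inter> E1" "b = (a \<union> b) \<inter> E2" "b' = (a' \<union> b') \<inter> E2"
        using m1[OF a(1)] m1[OF a(2)] m2[OF b(1)] m2[OF b(2)] E12 by blast+
      then show "a = a' \<and> b = b'" using eq by metis
    qed
  qed (simp add: case_prod_beta)
  also have "(\<lambda>(a,b). a \<union> b) ` (matchings E1 \<times> matchings E2) = matchings (E1 \<union> E2)"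
  proof
    show "(\<lambda>(a,b). a \<union> b) ` (matchings E1 \<times> matchings E2) \<subseteq> matchings (E1 \<union> E2)"
    proof clarify
      fix a b assume a: "a \<in> matchings E1" and b: "b \<in> matchings E2"
      note ma = m1[OF a] and mb = m2[OF b]
      show "a \<union> b \<in> matchings (E1 \<union> E2)"
        unfolding matchings_def
      proof (intro CollectI conjI)
        show "a \<union> b \<subseteq> E1 \<union> E2" using ma mb by blast
        show "\<forall>e\<in>a \<union> b. \<forall>g\<in>a \<union> b. e \<noteq> g \<longrightarrow> e \<inter> g = {}"
        proof (intro ballI impI)
          fix e g assume e: "e \<in> a \<union> b" and g: "g \<in> a \<union> b" and ne: "e \<noteq> g"
          have pa: "\<forall>e\<in>a. \<forall>g\<in>a. e \<noteq> g \<longrightarrow> e \<inter> g = {}" using a unfolding matchings_def by simp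
          have pb: "\<forall>e\<in>b. \<forall>g\<in>b. e \<noteq> g \<longrightarrow> e \<inter> g = {}" using b unfolding matchings_def by simp
          show "e \<inter> g = {}"
          proof (cases "e \<in> a")
            case True
            show ?thesis
            proof (cases "g \<in> a")
              case True then show ?thesis using pa \<open>e \<in> a\<close> ne by blast
            next
              case False then have "g \<in> b" using g by simp
              then have "g \<subseteq> V2" "e \<subseteq> V1" using ma mb \<open>e \<in> a\<close> by auto
              then show ?thesis using disj by auto
            qed
          next
            case False then have eb: "e \<in> b" using e by simp
            show ?thesis
            proof (cases "g \<in> b")
              case True then show ?thesis using pb eb ne by blast
            next
              case False then have "g \<in> a" using g by simp
              then have "g \<subseteq> V1" "e \<subseteq> V2" using ma mb eb by auto
              then show ?thesis using disj by auto
            qed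
          qed
        qed
      qed
    qed
  next
    show "matchings (E1 \<union> E2) \<subseteq> (\<lambda>(a,b). a \<union> b) ` (matchings E1 \<times> matchings E2)"
    proof
      fix M assume M: "M \<in> matchings (E1 \<union> E2)"
      have "M \<inter> E1 \<in> matchings E1" "M \<inter> E2 \<in> matchings E2" "M = (M \<inter> E1) \<union> (M \<inter> E2)"
        using M unfolding matchings_def by auto
      then show "M \<in> (\<lambda>(a,b). a \<union> b) ` (matchings E1 \<times> matchings E2)"
        by (metis (no_types, lifting) SigmaI case_prod_conv image_eqI)
    qed
  qed
  finally show ?thesis unfolding F_def tm_def ..
qed

lemma matchings_empty: "matchings {} = {{}}"
  unfolding matchings_def by auto

lemma F_empty: "F f c {} {} = 1"
  unfolding F_def matchings_empty by simp

lemma F_UN: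
  assumes "finite I" and "\<forall>i\<in>I. simple_graph (V i) (E i)"
    and "\<forall>i\<in>I. \<forall>j\<in>I. i \<noteq> j \<longrightarrow> V i \<inter> V j = {}"
  shows "F f c (\<Union>i\<in>I. V i) (\<Union>i\<in>I. E i) = (\<Prod>i\<in>I. F f c (V i) (E i))"
  using assms
proof (induction I rule: finite_induct)
  case empty
  then show ?case by (simp add: F_empty)
next
  case (insert a I)
  have sgI: "simple_graph (\<Union>i\<in>I. V i) (\<Union>i\<in>I. E i)"
    using insert.prems(1) insert.hyps(1) by (intro sg_UN) auto
  have "F f c (\<Union>i\<in>insert a I. V i) (\<Union>i\<in>insert a I. E i)
      = F f c (V a \<union> (\<Union>i\<in>I. V i)) (E a \<union> (\<Union>i\<in>I. E i))" by simp
  also have "\<dots> = F f c (V a) (E a) * F f c (\<Union>i\<in>I. V i) (\<Union>i\<in>I. E i)"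
    by (rule F_union) (use insert sgI in auto)
  also have "\<dots> = F f c (V a) (E a) * (\<Prod>i\<in>I. F f c (V i) (E i))"
    using insert by simp
  finally show ?case using insert.hyps by simp
qed

lemma matchings_induced: "matchings (induced_edges E S) = {M\<in>matchings E. \<Union>M \<subseteq> S}"
  unfolding matchings_def induced_edges_def by auto

lemma card_Union_matching:
  assumes sg: "simple_graph V E" and M: "M \<in> matchings E"
  shows "card (\<Union>M) = 2 * card M"
proof -
  have ME: "M \<subseteq> E" and pw: "\<forall>e\<in>M. \<forall>f\<in>M. e \<noteq> f \<longrightarrow> e \<inter> f = {}" using M unfolding matchings_def by auto
  have c2: "card e = 2" if "e \<in> M" for e
  proof -
    have "e \<in> E" using ME that by auto
    then obtain a b where "a \<noteq> b" "e = {a,b}" using sg unfolding simple_graph_def by blast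
    then show ?thesis by simp
  qed
  have "card (\<Union>M) = sum card M"
  proof (rule card_Union_disjoint)
    show "pairwise disjnt M" using pw unfolding pairwise_def disjnt_def by blast
    fix A assume "A \<in> M"
    then have "card A = 2" by (rule c2)
    then show "finite A" by (intro card_ge_0_finite) simp
  qed
  also have "\<dots> = sum (\<lambda>_. 2) M" using c2 by (rule sum.cong[OF refl])
  finally show ?thesis by simp
qed

lemma eta_F:
  assumes sg: "simple_graph V E"
  shows "eta w w1 V E x = F (\<lambda>v. x - w1 v) (\<lambda>e. (cmod (w e))\<^sup>2) V E"
proof -
  have finV: "finite V" using sg unfolding simple_graph_def by auto
  have finE: "finite E" using sg_finite_E[OF sg] .
  define g where "g = (\<lambda>S M. (-1::real) ^ card (V - S) * (\<Prod>v\<in>V - S. w1 v) *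
       ((-1) ^ card M * (cmod (\<Prod>e\<in>M. w e))\<^sup>2 * x ^ (card S - 2 * card M)))"
  have "eta w w1 V E x = (\<Sum>S\<in>Pow V. \<Sum>M\<in>{M\<in>matchings E. \<Union>M \<subseteq> S}. g S M)"
    unfolding eta_def mu_w_def matchings_induced g_def by (simp add: sum_distrib_left)
  also have "\<dots> = (\<Sum>M\<in>matchings E. \<Sum>S\<in>{S\<in>Pow V. \<Union>M \<subseteq> S}. g S M)"
    by (rule sum.swap_restrict) (use finV finite_matchings[OF finE] in auto)
  also have "\<dots> = F (\<lambda>v. x - w1 v) (\<lambda>e. (cmod (w e))\<^sup>2) V E"
    unfolding F_def
  proof (rule sum.cong[OF refl])
    fix M assume M: "M \<in> matchings E"
    define K where "K = \<Union>M"
    define U where "U = V - K"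
    have KV: "K \<subseteq> V" using M sg_edge[OF sg] unfolding K_def matchings_def by blast
    have finK: "finite K" using KV finV finite_subset by blast
    have finU: "finite U" using finV unfolding U_def by simp
    have cK: "card K = 2 * card M" unfolding K_def by (rule card_Union_matching[OF sg M])
    have img: "{S\<in>Pow V. K \<subseteq> S} = (\<lambda>R. K \<union> R) ` Pow U"
    proof
      show "{S\<in>Pow V. K \<subseteq> S} \<subseteq> (\<lambda>R. K \<union> R) ` Pow U"
      proof
        fix S assume "S \<in> {S\<in>Pow V. K \<subseteq> S}"
        then have "S = K \<union> (S - K)" "S - K \<in> Pow U" unfolding U_def by auto
        then show "S \<in> (\<lambda>R. K \<union> R) ` Pow U" by blast
      qed
      show "(\<lambda>R. K \<union> R) ` Pow U \<subseteq> {S\<in>Pow V. K \<subseteq> S}" using KV unfolding U_def by auto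
    qed
    have inj: "inj_on (\<lambda>R. K \<union> R) (Pow U)"
    proof (rule inj_onI)
      fix R R' assume "R \<in> Pow U" "R' \<in> Pow U" "K \<union> R = K \<union> R'"
      then show "R = R'" unfolding U_def by blast
    qed
    have "(\<Sum>S\<in>{S\<in>Pow V. \<Union>M \<subseteq> S}. g S M) = (\<Sum>R\<in>Pow U. g (K \<union> R) M)"
      unfolding K_def[symmetric] img by (rule sum.reindex[OF inj, unfolded o_def])
    also have "\<dots> = (\<Sum>R\<in>Pow U. ((-1) ^ card M * (cmod (\<Prod>e\<in>M. w e))\<^sup>2) *
          ((\<Prod>v\<in>R. x) * (\<Prod>v\<in>U - R. - w1 v)))"
    proof (rule sum.cong[OF refl])
      fix R assume R: "R \<in> Pow U"
      have finR: "finite R" using R finU finite_subset by blast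
      have d1: "V - (K \<union> R) = U - R" unfolding U_def by auto
      have d2: "card (K \<union> R) = card K + card R"
        by (rule card_Un_disjoint) (use finK finR R in \<open>auto simp: U_def\<close>)
      have "(\<Prod>v\<in>U - R. - w1 v) = (-1) ^ card (U - R) * (\<Prod>v\<in>U - R. w1 v)"
        by (rule prod_uminus)
      then show "g (K \<union> R) M = ((-1) ^ card M * (cmod (\<Prod>e\<in>M. w e))\<^sup>2) *
          ((\<Prod>v\<in>R. x) * (\<Prod>v\<in>U - R. - w1 v))"
        unfolding g_def d1 d2 cK by simp
    qed
    also have "\<dots> = ((-1) ^ card M * (cmod (\<Prod>e\<in>M. w e))\<^sup>2) * (\<Sum>R\<in>Pow U. 
          ((\<Prod>v\<in>R. x) * (\<Prod>v\<in>U - R. - w1 v)))"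
      by (rule sum_distrib_left[symmetric])
    also have "\<dots> = ((-1) ^ card M * (cmod (\<Prod>e\<in>M. w e))\<^sup>2) * (\<Prod>v\<in>U. x + - w1 v)"
      by (subst prod_add[OF finU]) (rule refl)
    also have "\<dots> = (-1) ^ card M * (\<Prod>e\<in>M. (cmod (w e))\<^sup>2) * (\<Prod>v\<in>V - \<Union>M. x - w1 v)"
      unfolding U_def K_def by (simp add: prod_norm[symmetric] prod_power_distrib)
    finally show "(\<Sum>S\<in>{S\<in>Pow V. \<Union>M \<subseteq> S}. g S M) =
        (-1) ^ card M * (\<Prod>e\<in>M. (cmod (w e))\<^sup>2) * (\<Prod>v\<in>V - \<Union>M. x - w1 v)" .
  qed
  finally show ?thesis .
qed

lemma all_nat_split: "(\<forall>i::nat. Q i) \<longleftrightarrow> Q 0 \<and> (\<forall>j. Q (Suc j))"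
proof
  assume "Q 0 \<and> (\<forall>j. Q (Suc j))"
  then show "\<forall>i. Q i" by (metis not0_implies_Suc)
qed simp

lemma chain_Cons2: "(\<forall>i. Suc i < length (a # b # q) \<longrightarrow> P ((a#b#q)!i) ((a#b#q)!Suc i)) \<longleftrightarrow>
   P a b \<and> (\<forall>i. Suc i < length (b # q) \<longrightarrow> P ((b#q)!i) ((b#q)!Suc i))"
  by (subst all_nat_split) simp

lemma chain_del:
  assumes "u \<notin> set q"
  shows "(\<forall>i. Suc i < length q \<longrightarrow> {q!i, q!Suc i} \<in> del_edges E u) \<longleftrightarrow>
         (\<forall>i. Suc i < length q \<longrightarrow> {q!i, q!Suc i} \<in> E)"
proof -
  have "u \<notin> {q!i, q!Suc i}" if "Suc i < length q" for i
    using assms that nth_mem[of i q] nth_mem[of "Suc i" q] by auto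
  then show ?thesis unfolding del_edges_def by auto
qed

lemma gpaths_hd: "p \<in> gpaths V E u \<Longrightarrow> p = u # tl p"
  unfolding gpaths_def by (cases p) auto

lemma gpaths_single: "[u] \<in> gpaths V E u \<longleftrightarrow> u \<in> V"
  unfolding gpaths_def by simp

lemma gpaths_Cons:
  assumes uV: "u \<in> V"
  shows "u # q \<in> gpaths V E u \<longleftrightarrow> q = [] \<or> ({u, hd q} \<in> E \<and> q \<in> gpaths (V - {u}) (del_edges E u) (hd q))"
proof (cases q)
  case Nil
  then show ?thesis using uV by (simp add: gpaths_single)
next
  case (Cons b r)
  have "u # q \<in> gpaths V E u \<longleftrightarrow> distinct (u#b#r) \<and> set (u#b#r) \<subseteq> V \<and> {u,b} \<in> E \<and>
        (\<forall>i. Suc i < length (b # r) \<longrightarrow> {(b#r)!i, (b#r)!Suc i} \<in> E)"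
    unfolding gpaths_def Cons using chain_Cons2[where P="\<lambda>x y. {x,y} \<in> E" and a=u and b=b and q=r]
    by auto
  also have "\<dots> \<longleftrightarrow> {u,b} \<in> E \<and> b#r \<in> gpaths (V - {u}) (del_edges E u) b"
  proof -
    have "u \<notin> set (b#r) \<Longrightarrow> (\<forall>i. Suc i < length (b # r) \<longrightarrow> {(b#r)!i, (b#r)!Suc i} \<in> del_edges E u) \<longleftrightarrow>
        (\<forall>i. Suc i < length (b # r) \<longrightarrow> {(b#r)!i, (b#r)!Suc i} \<in> E)" by (rule chain_del)
    then show ?thesis unfolding gpaths_def using uV by auto
  qed
  finally show ?thesis using Cons by simp
qed

lemma finite_gpaths: "finite V \<Longrightarrow> finite (gpaths V E u)"
  by (rule finite_subset[OF _ finite_subset_distinct[of V]]) (auto simp: gpaths_def)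

definition TV :: "'v list \<Rightarrow> 'v set \<Rightarrow> 'v set set \<Rightarrow> 'v \<Rightarrow> 'v list set" where
  "TV pre V E u = (\<lambda>p. pre @ p) ` gpaths V E u"

definition TE :: "'v list \<Rightarrow> 'v set \<Rightarrow> 'v set set \<Rightarrow> 'v \<Rightarrow> 'v list set set" where
  "TE pre V E u = {{pre @ p, pre @ p @ [y]} | p y. p \<in> gpaths V E u \<and> p @ [y] \<in> gpaths V E u}"

lemma sg_tree:
  assumes "finite V" shows "simple_graph (TV pre V E u) (TE pre V E u)"
  unfolding simple_graph_def
proof (intro conjI ballI)
  show "finite (TV pre V E u)" unfolding TV_def using finite_gpaths[OF assms] by simp
  fix e assume "e \<in> TE pre V E u"
  then obtain p y where e: "e = {pre @ p, pre @ p @ [y]}" "p \<in> gpaths V E u" "p @ [y] \<in> gpaths V E u"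
    unfolding TE_def by blast
  have "pre @ p \<noteq> pre @ p @ [y]" by simp
  moreover have "pre @ p \<in> TV pre V E u" "pre @ p @ [y] \<in> TV pre V E u"
    unfolding TV_def using e by (auto intro!: image_eqI)
  ultimately show "\<exists>a b. a \<noteq> b \<and> a \<in> TV pre V E u \<and> b \<in> TV pre V E u \<and> e = {a, b}"
    using e(1) by (intro exI[of _ "pre @ p"] exI[of _ "pre @ p @ [y]"]) simp
qed

lemma TV_elem: "x \<in> TV pre V E u \<Longrightarrow> \<exists>q. x = pre @ u # q"
  unfolding TV_def using gpaths_hd by fastforce

lemma TE_sub: "e \<in> TE pre V E u \<Longrightarrow> e \<subseteq> TV pre V E u"
  unfolding TE_def TV_def by auto

lemma sg_nbr: "simple_graph V E \<Longrightarrow> {u,v} \<in> E \<Longrightarrow> v \<in> V \<and> v \<noteq> u \<and> u \<in> V"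
proof -
  assume sg: "simple_graph V E" and e: "{u,v} \<in> E"
  then obtain a b where "a \<noteq> b" "a \<in> V" "b \<in> V" "{u,v} = {a,b}" unfolding simple_graph_def by metis
  then show ?thesis by (auto simp: doubleton_eq_iff)
qed

lemma gpaths_hd2: "q \<in> gpaths V E v \<Longrightarrow> q \<noteq> [] \<and> hd q = v"
  unfolding gpaths_def by simp

lemma TV_decomp:
  assumes uV: "u \<in> V"
  shows "TV pre V E u = insert (pre@[u]) (\<Union>v\<in>{v. {u,v}\<in>E}. TV (pre@[u]) (V-{u}) (del_edges E u) v)"
proof
  show "TV pre V E u \<subseteq> insert (pre@[u]) (\<Union>v\<in>{v. {u,v}\<in>E}. TV (pre@[u]) (V-{u}) (del_edges E u) v)"
  proof
    fix x assume "x \<in> TV pre V E u"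
    then obtain p where p: "p \<in> gpaths V E u" "x = pre @ p" unfolding TV_def by auto
    define q where "q = tl p"
    have pq: "p = u # q" using gpaths_hd[OF p(1)] q_def by simp
    show "x \<in> insert (pre@[u]) (\<Union>v\<in>{v. {u,v}\<in>E}. TV (pre@[u]) (V-{u}) (del_edges E u) v)"
    proof (cases "q = []")
      case True then show ?thesis using p pq by simp
    next
      case False
      then have q1: "{u, hd q} \<in> E" and q2: "q \<in> gpaths (V-{u}) (del_edges E u) (hd q)"
        using gpaths_Cons[OF uV, of q E] p(1) pq by auto
      have "x = (pre@[u]) @ q" using p pq by simp
      then have "x \<in> TV (pre@[u]) (V-{u}) (del_edges E u) (hd q)" unfolding TV_def using q2 by (rule image_eqI)
      then show ?thesis using q1 by auto
    qed
  qed
next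
  show "insert (pre@[u]) (\<Union>v\<in>{v. {u,v}\<in>E}. TV (pre@[u]) (V-{u}) (del_edges E u) v) \<subseteq> TV pre V E u"
  proof
    fix x assume x: "x \<in> insert (pre@[u]) (\<Union>v\<in>{v. {u,v}\<in>E}. TV (pre@[u]) (V-{u}) (del_edges E u) v)"
    show "x \<in> TV pre V E u"
    proof (cases "x = pre@[u]")
      case True
      have "[u] \<in> gpaths V E u" using uV by (simp add: gpaths_single)
      then show ?thesis unfolding TV_def True by (rule image_eqI[rotated]) simp
    next
      case False
      then obtain v where v: "{u,v}\<in>E" "x \<in> TV (pre@[u]) (V-{u}) (del_edges E u) v" using x by auto
      then obtain q where q: "q \<in> gpaths (V-{u}) (del_edges E u) v" "x = (pre@[u]) @ q" unfolding TV_def by auto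
      have hq: "q \<noteq> []" "hd q = v" using gpaths_hd2[OF q(1)] by auto
      then have "u # q \<in> gpaths V E u" using gpaths_Cons[OF uV] v q by auto
      moreover have "x = pre @ (u # q)" using q(2) by simp
      ultimately show ?thesis unfolding TV_def by (rule image_eqI[rotated])
    qed
  qed
qed

lemma TE_decomp:
  assumes uV: "u \<in> V" and sg: "simple_graph V E"
  shows "TE pre V E u = (\<lambda>v. {pre@[u], pre@[u,v]}) ` {v. {u,v}\<in>E} \<union>
     (\<Union>v\<in>{v. {u,v}\<in>E}. TE (pre@[u]) (V-{u}) (del_edges E u) v)"
proof
  show "TE pre V E u \<subseteq> (\<lambda>v. {pre@[u], pre@[u,v]}) ` {v. {u,v}\<in>E} \<union>
     (\<Union>v\<in>{v. {u,v}\<in>E}. TE (pre@[u]) (V-{u}) (del_edges E u) v)"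
  proof
    fix e assume "e \<in> TE pre V E u"
    then obtain p y where e: "e = {pre @ p, pre @ p @ [y]}" "p \<in> gpaths V E u" "p @ [y] \<in> gpaths V E u"
      unfolding TE_def by auto
    define q where "q = tl p"
    have pq: "p = u # q" using gpaths_hd[OF e(2)] q_def by simp
    show "e \<in> (\<lambda>v. {pre@[u], pre@[u,v]}) ` {v. {u,v}\<in>E} \<union>
     (\<Union>v\<in>{v. {u,v}\<in>E}. TE (pre@[u]) (V-{u}) (del_edges E u) v)"
    proof (cases "q = []")
      case True
      then have "u # [y] \<in> gpaths V E u" using e(3) pq by simp
      then have "{u,y} \<in> E" using gpaths_Cons[OF uV, of "[y]" E] by simp
      moreover have "e = {pre@[u], pre@[u,y]}" using e(1) pq True by simp
      ultimately show ?thesis by blast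
    next
      case False
      then have q1: "{u, hd q} \<in> E" and q2: "q \<in> gpaths (V-{u}) (del_edges E u) (hd q)"
        using gpaths_Cons[OF uV, of q E] e(2) pq by auto
      have "u # (q @ [y]) \<in> gpaths V E u" using e(3) pq by simp
      then have q3: "q @ [y] \<in> gpaths (V-{u}) (del_edges E u) (hd q)"
        using gpaths_Cons[OF uV, of "q @ [y]" E] False by simp
      have "e = {(pre@[u]) @ q, (pre@[u]) @ q @ [y]}" using e(1) pq by simp
      then have "e \<in> TE (pre@[u]) (V-{u}) (del_edges E u) (hd q)"
        unfolding TE_def using q2 q3 by blast
      then show ?thesis using q1 by auto
    qed
  qed
next
  show "(\<lambda>v. {pre@[u], pre@[u,v]}) ` {v. {u,v}\<in>E} \<union>
     (\<Union>v\<in>{v. {u,v}\<in>E}. TE (pre@[u]) (V-{u}) (del_edges E u) v) \<subseteq> TE pre V E u"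
  proof
    fix e assume e: "e \<in> (\<lambda>v. {pre@[u], pre@[u,v]}) ` {v. {u,v}\<in>E} \<union>
     (\<Union>v\<in>{v. {u,v}\<in>E}. TE (pre@[u]) (V-{u}) (del_edges E u) v)"
    show "e \<in> TE pre V E u"
    proof (cases "e \<in> (\<lambda>v. {pre@[u], pre@[u,v]}) ` {v. {u,v}\<in>E}")
      case True
      then obtain v where v: "{u,v} \<in> E" "e = {pre@[u], pre@[u,v]}" by auto
      have "v \<in> V - {u}" using sg_nbr[OF sg v(1)] by auto
      then have "[v] \<in> gpaths (V-{u}) (del_edges E u) v" by (simp add: gpaths_single)
      then have "[u] @ [v] \<in> gpaths V E u" using gpaths_Cons[OF uV, of "[v]" E] v(1) by simp
      moreover have "[u] \<in> gpaths V E u" using uV by (simp add: gpaths_single)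
      moreover have "e = {pre @ [u], pre @ [u] @ [v]}" using v(2) by simp
      ultimately show ?thesis unfolding TE_def by blast
    next
      case False
      then obtain v where v: "{u,v} \<in> E" "e \<in> TE (pre@[u]) (V-{u}) (del_edges E u) v" using e by auto
      then obtain q y where q: "e = {(pre@[u]) @ q, (pre@[u]) @ q @ [y]}"
          "q \<in> gpaths (V-{u}) (del_edges E u) v" "q @ [y] \<in> gpaths (V-{u}) (del_edges E u) v"
        unfolding TE_def by auto
      have hq: "q \<noteq> []" "hd q = v" using gpaths_hd2[OF q(2)] by auto
      have "u # q \<in> gpaths V E u" using gpaths_Cons[OF uV, of q E] hq v q by auto
      moreover have "u # (q @ [y]) \<in> gpaths V E u" using gpaths_Cons[OF uV, of "q @ [y]" E] hq v q by auto
      moreover have "e = {pre @ (u # q), pre @ (u # q) @ [y]}" using q(1) by simp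
      ultimately have "\<exists>p ya. e = {pre @ p, pre @ p @ [ya]} \<and> p \<in> gpaths V E u \<and> p @ [ya] \<in> gpaths V E u"
        by (intro exI[of _ "u # q"] exI[of _ y]) simp
      then show ?thesis unfolding TE_def by simp
    qed
  qed
qed


definition tw :: "'v list set \<Rightarrow> 'v set" where
  "tw e = (let q = (THE q. q \<in> e \<and> q \<noteq> [] \<and> butlast q \<in> e) in {last (butlast q), last q})"

lemma tree_w_tw: "tree_w w e = w (tw e)"
  by (simp add: tree_w_def tw_def Let_def)

lemma tw_edge:
  assumes "a \<noteq> []"
  shows "tw {a, a @ [y]} = {last a, y}"
proof -
  have "(THE q. q \<in> {a, a @ [y]} \<and> q \<noteq> [] \<and> butlast q \<in> {a, a @ [y]}) = a @ [y]"
  proof (rule the_equality)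
    show "a @ [y] \<in> {a, a @ [y]} \<and> a @ [y] \<noteq> [] \<and> butlast (a @ [y]) \<in> {a, a @ [y]}" by simp
  next
    fix q assume q: "q \<in> {a, a @ [y]} \<and> q \<noteq> [] \<and> butlast q \<in> {a, a @ [y]}"
    show "q = a @ [y]"
    proof (rule ccontr)
      assume "q \<noteq> a @ [y]"
      then have "q = a" using q by auto
      then have "butlast a = a \<or> butlast a = a @ [y]" using q by auto
      then have "length (butlast a) = length a \<or> length (butlast a) = Suc (length a)"
        by (metis length_append_singleton)
      moreover have "length (butlast a) = length a - 1" by simp
      moreover have "length a > 0" using assms by simp
      ultimately show False by linarith
    qed
  qed
  then show ?thesis unfolding tw_def Let_def by simp
qed

lemma sg_del: "simple_graph V E \<Longrightarrow> simple_graph (V - {u}) (del_edges E u)"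
  unfolding simple_graph_def del_edges_def by (auto; metis insertCI)

lemma main_lemma:
  assumes "simple_graph V E" "u \<in> V"
  shows "F f c (V - {u}) (del_edges E u) * F (f \<circ> last) (c \<circ> tw) (TV pre V E u) (TE pre V E u) =
         F f c V E * F (f \<circ> last) (c \<circ> tw) (TV pre V E u - {pre @ [u]}) (del_edges (TE pre V E u) (pre @ [u]))"
  using assms
proof (induction "card V" arbitrary: V E u pre rule: less_induct)
  case less
  note sg = less.prems(1) and uV = less.prems(2)
  define fT where "fT = f \<circ> last"
  define cT where "cT = c \<circ> tw"
  define r where "r = pre @ [u]"
  define N where "N = {v. {u,v} \<in> E}"
  define V' where "V' = V - {u}"
  define E' where "E' = del_edges E u"
  define T where "T = (\<lambda>v. TV r V' E' v)"
  define Te where "Te = (\<lambda>v. TE r V' E' v)"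
  define rv where "rv = (\<lambda>v. pre @ [u, v])"
  have finV: "finite V" using sg unfolding simple_graph_def by auto
  have NV': "v \<in> V'" if "v \<in> N" for v using sg_nbr[OF sg] that unfolding N_def V'_def by auto
  have finN: "finite N" using NV' finV finite_subset[of N V'] unfolding V'_def by auto
  have finV': "finite V'" using finV unfolding V'_def by simp
  have sg': "simple_graph V' E'" unfolding V'_def E'_def by (rule sg_del[OF sg])
  have card': "card V' < card V" unfolding V'_def using finV uV by (rule card_Diff1_less)
  have IH: "F f c (V' - {v}) (del_edges E' v) * F fT cT (T v) (Te v) =
      F f c V' E' * F fT cT (T v - {rv v}) (del_edges (Te v) (rv v))" if "v \<in> N" for v
    using less.hyps[OF card' sg' NV'[OF that], of r] unfolding T_def Te_def fT_def cT_def rv_def r_def by simp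
  have hTV: "TV pre V E u = insert r (\<Union>v\<in>N. T v)"
    unfolding r_def N_def T_def V'_def E'_def by (rule TV_decomp[OF uV])
  have hTE: "TE pre V E u = (\<lambda>v. {r, rv v}) ` N \<union> (\<Union>v\<in>N. Te v)"
    unfolding r_def N_def Te_def V'_def E'_def rv_def by (rule TE_decomp[OF uV sg])
  have elemT: "\<exists>q. x = pre @ u # v # q" if "x \<in> T v" for x v
    using TV_elem[OF that[unfolded T_def]] unfolding r_def by auto
  have Tsg: "simple_graph (T v) (Te v)" for v unfolding T_def Te_def by (rule sg_tree[OF finV'])
  have Tdisj: "T v \<inter> T v' = {}" if "v \<noteq> v'" for v v'
  proof (rule ccontr)
    assume "T v \<inter> T v' \<noteq> {}"
    then obtain x where "x \<in> T v" "x \<in> T v'" by auto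
    then obtain q q' where "x = pre @ u # v # q" "x = pre @ u # v' # q'" using elemT by metis
    then show False using that by simp
  qed
  have rnot: "r \<notin> T v" for v
  proof
    assume "r \<in> T v"
    then obtain q where "r = pre @ u # v # q" using elemT by metis
    then show False unfolding r_def by simp
  qed
  have rvin: "rv v \<in> T v" if "v \<in> N" for v
  proof -
    have "[v] \<in> gpaths V' E' v" using NV'[OF that] by (simp add: gpaths_single)
    then show ?thesis unfolding T_def TV_def rv_def r_def by (rule image_eqI[rotated]) simp
  qed
  have Tesub: "e \<subseteq> T v" if "e \<in> Te v" for e v using TE_sub[of e r V' E' v] that unfolding T_def Te_def by simp
  have sgT: "simple_graph (TV pre V E u) (TE pre V E u)" by (rule sg_tree[OF finV])
  have rin: "r \<in> TV pre V E u" using hTV by simp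
  have a: "del_edges (TE pre V E u) r = (\<Union>v\<in>N. Te v)"
  proof
    show "del_edges (TE pre V E u) r \<subseteq> (\<Union>v\<in>N. Te v)"
      unfolding del_edges_def hTE by auto
    show "(\<Union>v\<in>N. Te v) \<subseteq> del_edges (TE pre V E u) r"
    proof
      fix e assume "e \<in> (\<Union>v\<in>N. Te v)"
      then obtain v where v: "v \<in> N" "e \<in> Te v" by auto
      then have "r \<notin> e" using Tesub rnot by blast
      then show "e \<in> del_edges (TE pre V E u) r" unfolding del_edges_def hTE using v by auto
    qed
  qed
  have b: "TV pre V E u - {r} = (\<Union>v\<in>N. T v)" unfolding hTV using rnot by auto
  have cN: "{q. {r,q} \<in> TE pre V E u} = rv ` N"
  proof
    show "{q. {r,q} \<in> TE pre V E u} \<subseteq> rv ` N"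
    proof
      fix q assume "q \<in> {q. {r,q} \<in> TE pre V E u}"
      then have q: "{r,q} \<in> TE pre V E u" by simp
      show "q \<in> rv ` N"
      proof (cases "{r,q} \<in> (\<lambda>v. {r, rv v}) ` N")
        case True
        then obtain v where "v \<in> N" "{r,q} = {r, rv v}" by auto
        then show ?thesis by (auto simp: doubleton_eq_iff)
      next
        case False
        then obtain v where "{r,q} \<in> Te v" using q unfolding hTE by auto
        then have "r \<in> T v" using Tesub by blast
        then show ?thesis using rnot by blast
      qed
    qed
    show "rv ` N \<subseteq> {q. {r,q} \<in> TE pre V E u}" unfolding hTE by auto
  qed
  have injrv: "inj_on rv N" unfolding rv_def by (rule inj_onI) simp
  have d: "TV pre V E u - {r} - {rv v} = (T v - {rv v}) \<union> (\<Union>v'\<in>N - {v}. T v')" if "v \<in> N" for v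
  proof -
    have "rv v \<notin> T v'" if "v' \<noteq> v" for v' using Tdisj[OF that] rvin[OF \<open>v \<in> N\<close>] by blast
    then show ?thesis unfolding b using that by auto
  qed
  have e: "del_edges (del_edges (TE pre V E u) r) (rv v) = del_edges (Te v) (rv v) \<union> (\<Union>v'\<in>N - {v}. Te v')"
    if "v \<in> N" for v
  proof -
    have "rv v \<notin> e" if "v' \<noteq> v" "e \<in> Te v'" for v' e
      using Tdisj[OF that(1)] rvin[OF \<open>v \<in> N\<close>] Tesub[OF that(2)] by blast
    moreover have "del_edges (del_edges (TE pre V E u) r) (rv v) = del_edges (\<Union>v\<in>N. Te v) (rv v)"
      using a by simp
    ultimately show ?thesis unfolding del_edges_def using that by auto
  qed
  have cTr: "cT {r, rv v} = c {u,v}" for v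
    unfolding cT_def r_def rv_def using tw_edge[of "pre @ [u]" v] by simp
  have fTr: "fT r = f u" unfolding fT_def r_def by simp
  define P where "P = (\<Prod>v\<in>N. F fT cT (T v) (Te v))"
  define Q where "Q = (\<lambda>v. \<Prod>v'\<in>N - {v}. F fT cT (T v') (Te v'))"
  have FTr: "F fT cT (TV pre V E u - {r}) (del_edges (TE pre V E u) r) = P"
    unfolding a b P_def
    by (rule F_UN) (use finN Tsg Tdisj in auto)
  have FTsub: "F fT cT (TV pre V E u - {r} - {rv v}) (del_edges (del_edges (TE pre V E u) r) (rv v))
      = F fT cT (T v - {rv v}) (del_edges (Te v) (rv v)) * Q v" if "v \<in> N" for v
  proof -
    have "F fT cT (TV pre V E u - {r} - {rv v}) (del_edges (del_edges (TE pre V E u) r) (rv v))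
      = F fT cT ((T v - {rv v}) \<union> (\<Union>v'\<in>N - {v}. T v')) (del_edges (Te v) (rv v) \<union> (\<Union>v'\<in>N - {v}. Te v'))"
      using d[OF that] e[OF that] by simp
    also have "\<dots> = F fT cT (T v - {rv v}) (del_edges (Te v) (rv v)) * F fT cT (\<Union>v'\<in>N - {v}. T v') (\<Union>v'\<in>N - {v}. Te v')"
    proof (rule F_union)
      show "simple_graph (T v - {rv v}) (del_edges (Te v) (rv v))" by (rule sg_del[OF Tsg])
      show "simple_graph (\<Union>v'\<in>N - {v}. T v') (\<Union>v'\<in>N - {v}. Te v')"
        by (rule sg_UN) (use finN Tsg in auto)
      show "(T v - {rv v}) \<inter> (\<Union>v'\<in>N - {v}. T v') = {}" using Tdisj by blast
    qed
    also have "F fT cT (\<Union>v'\<in>N - {v}. T v') (\<Union>v'\<in>N - {v}. Te v') = Q v"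
      unfolding Q_def by (rule F_UN) (use finN Tsg Tdisj in auto)
    finally show ?thesis .
  qed
  have FT: "F fT cT (TV pre V E u) (TE pre V E u) = f u * P -
      (\<Sum>v\<in>N. c {u,v} * (F fT cT (T v - {rv v}) (del_edges (Te v) (rv v)) * Q v))"
  proof -
    have "F fT cT (TV pre V E u) (TE pre V E u) = fT r * F fT cT (TV pre V E u - {r}) (del_edges (TE pre V E u) r)
      - (\<Sum>q\<in>{q. {r,q} \<in> TE pre V E u}. cT {r,q} * F fT cT (TV pre V E u - {r} - {q}) (del_edges (del_edges (TE pre V E u) r) q))"
      by (rule F_rec[OF sgT rin])
    also have "(\<Sum>q\<in>{q. {r,q} \<in> TE pre V E u}. cT {r,q} * F fT cT (TV pre V E u - {r} - {q}) (del_edges (del_edges (TE pre V E u) r) q))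
       = (\<Sum>v\<in>N. cT {r,rv v} * F fT cT (TV pre V E u - {r} - {rv v}) (del_edges (del_edges (TE pre V E u) r) (rv v)))"
      unfolding cN by (rule sum.reindex[OF injrv, unfolded o_def])
    also have "\<dots> = (\<Sum>v\<in>N. c {u,v} * (F fT cT (T v - {rv v}) (del_edges (Te v) (rv v)) * Q v))"
      by (rule sum.cong[OF refl]) (simp add: cTr FTsub)
    finally show ?thesis unfolding fTr FTr .
  qed
  have FG: "F f c V E = f u * F f c V' E' - (\<Sum>v\<in>N. c {u,v} * F f c (V' - {v}) (del_edges E' v))"
    unfolding V'_def E'_def N_def by (rule F_rec[OF sg uV])
  have Pv: "P = F fT cT (T v) (Te v) * Q v" if "v \<in> N" for v
    unfolding P_def Q_def using finN that by (rule prod.remove)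
  have "F f c V' E' * F fT cT (TV pre V E u) (TE pre V E u) = F f c V E * P"
  proof -
    have "F f c V' E' * (\<Sum>v\<in>N. c {u,v} * (F fT cT (T v - {rv v}) (del_edges (Te v) (rv v)) * Q v))
        = (\<Sum>v\<in>N. c {u,v} * F f c (V' - {v}) (del_edges E' v)) * P"
      unfolding sum_distrib_left sum_distrib_right
    proof (rule sum.cong[OF refl])
      fix v assume v: "v \<in> N"
      show "F f c V' E' * (c {u, v} * (F fT cT (T v - {rv v}) (del_edges (Te v) (rv v)) * Q v)) =
            c {u, v} * F f c (V' - {v}) (del_edges E' v) * P"
        using IH[OF v] Pv[OF v] by (simp add: algebra_simps)
    qed
    then show ?thesis unfolding FT FG by (simp add: algebra_simps)
  qed
  then have "F f c V' E' * F fT cT (TV pre V E u) (TE pre V E u) =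
      F f c V E * F fT cT (TV pre V E u - {r}) (del_edges (TE pre V E u) r)" using FTr by simp
  then show ?case unfolding fT_def cT_def r_def V'_def E'_def .
qed

theorem theorem3p1:
  fixes V :: "'v set" and E :: "'v set set" and w :: "'v set \<Rightarrow> complex"
    and w1 :: "'v \<Rightarrow> real" and u :: 'v and x :: real
  assumes "simple_graph V E"
    and "\<forall>e\<in>E. w e \<noteq> 0"
    and "u \<in> V"
    and "eta w w1 V E x \<noteq> 0"
    and "eta (tree_w w) (tree_w1 w1) (gpaths V E u) (tree_edges V E u) x \<noteq> 0"
  shows "eta w w1 (del_vertices V u) (del_edges E u) x / eta w w1 V E x =
         eta (tree_w w) (tree_w1 w1) (del_vertices (gpaths V E u) [u]) (del_edges (tree_edges V E u) [u]) x
         / eta (tree_w w) (tree_w1 w1) (gpaths V E u) (tree_edges V E u) x"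
proof -
  note sg = assms(1) and uV = assms(3)
  define f where "f = (\<lambda>v. x - w1 v)"
  define c where "c = (\<lambda>e. (cmod (w e))\<^sup>2)"
  have finV: "finite V" using sg unfolding simple_graph_def by auto
  have gT: "gpaths V E u = TV [] V E u" unfolding TV_def by simp
  have eT: "tree_edges V E u = TE [] V E u" unfolding TE_def tree_edges_def by simp
  have sgT: "simple_graph (TV [] V E u) (TE [] V E u)" by (rule sg_tree[OF finV])
  have fl: "(\<lambda>p. x - tree_w1 w1 p) = f \<circ> last" unfolding f_def tree_w1_def by auto
  have cl: "(\<lambda>e. (cmod (tree_w w e))\<^sup>2) = c \<circ> tw" unfolding c_def tree_w_tw by auto
  have a: "eta w w1 V E x = F f c V E" unfolding f_def c_def by (rule eta_F[OF sg])
  have b: "eta w w1 (del_vertices V u) (del_edges E u) x = F f c (V - {u}) (del_edges E u)"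
    unfolding f_def c_def del_vertices_def by (rule eta_F[OF sg_del[OF sg]])
  have A: "eta (tree_w w) (tree_w1 w1) (gpaths V E u) (tree_edges V E u) x
      = F (f \<circ> last) (c \<circ> tw) (TV [] V E u) (TE [] V E u)"
    unfolding gT eT fl[symmetric] cl[symmetric] by (rule eta_F[OF sgT])
  have B: "eta (tree_w w) (tree_w1 w1) (del_vertices (gpaths V E u) [u]) (del_edges (tree_edges V E u) [u]) x
      = F (f \<circ> last) (c \<circ> tw) (TV [] V E u - {[] @ [u]}) (del_edges (TE [] V E u) ([] @ [u]))"
    unfolding gT eT fl[symmetric] cl[symmetric] del_vertices_def by (simp add: eta_F[OF sg_del[OF sgT]])
  have main: "F f c (V - {u}) (del_edges E u) * F (f \<circ> last) (c \<circ> tw) (TV [] V E u) (TE [] V E u) =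
         F f c V E * F (f \<circ> last) (c \<circ> tw) (TV [] V E u - {[] @ [u]}) (del_edges (TE [] V E u) ([] @ [u]))"
    by (rule main_lemma[OF sg uV])
  have n1: "F f c V E \<noteq> 0" using assms(4) a by simp
  have n2: "F (f \<circ> last) (c \<circ> tw) (TV [] V E u) (TE [] V E u) \<noteq> 0" using assms(5) A by simp
  show ?thesis unfolding a b A B using main n1 n2 by (simp add: divide_eq_eq field_simps)
qed

end
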